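(* Let $(G,o)$ be a directed median graph and let $v$ be a vertex of $G$. Then: (i) $\mathcal{F}_o(v,G)$ induces a convex subgraph of $G$; (ii) the restriction of the partial order $\prec_o$ to $\mathcal{F}_o(v,G)$ coincides with the restriction of the canonical basepoint order $\le_v$ to $\mathcal{F}_o(v,G)$; (iii) $\mathcal{F}_o(v,G)$ together with $\prec_o$ is (isomorphic to) the domain of an event structure; (iv) for any vertex $u\in \mathcal{F}_o(v,G)$, the principal filter $\mathcal{F}_o(u,G)$ is included in $\mathcal{F}_o(v,G)$ and coincides with the principal filter of $u$ with respect to the order $\le_v$ restricted to $\mathcal{F}_o(v,G)$.
   Context: A graph $G$ is median if for every three vertices $x,y,z$ the set $I(x,y)\cap I(y,z)\cap I(z,x)$ is a single vertex, where $I(u,w)=\{t: d(u,t)+d(t,w)=d(u,w)\}$ and $d$ is the graph distance. A subgraph is convex if it contains $I(x,y)$ for all its vertices $x,y$. For a vertex $v$, the canonical basepoint order is $x\le_v y$ iff $x\in I(v,y)$. A directed median graph $(G,o)$ is a median graph $G$ with an orientation $o$ of its edges such that opposite edges of every 4-cycle (square) of $G$ are oriented in the same direction (when the square is traversed so that they are parallel). The relation $\prec_o$ on vertices is defined by $x\prec_o y$ iff there is a directed path (possibly of length $0$) from $x$ to $y$; it is a partial order. The principal filter of $v$ is $\mathcal{F}_o(v,G)=\{x: v\prec_o x\}$. An event structure is a triple $(E,\le,\#)$ where $E$ is a set, $\le$ is a partial order on $E$ with $\{e'\,:\,e'\le e\}$ finite for all $e$, $\#$ is an irreflexive symmetric relation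 with $e\#e'$ and $e'\le e''$ implying $e\# e''$. A configuration is a finite subset of $E$ that is downward closed for $\le$ and contains no two events in conflict; the domain of the event structure is the set of configurations ordered by inclusion. *)

theory Defs
  imports Main
begin

definition simple_graph :: "'a set \<Rightarrow> ('a \<Rightarrow> 'a \<Rightarrow> bool) \<Rightarrow> bool" where
  "simple_graph V Adj \<longleftrightarrow>
     (\<forall>x y. Adj x y \<longrightarrow> x \<in> V \<and> y \<in> V) \<and>
     (\<forall>x y. Adj x y \<longrightarrow> Adj y x) \<and> (\<forall>x. \<not> Adj x x)"

definition connected_graph :: "'a set \<Rightarrow> ('a \<Rightarrow> 'a \<Rightarrow> bool) \<Rightarrow> bool" where
  "connected_graph V Adj \<longleftrightarrow> (\<forall>x\<in>V. \<forall>y\<in>V. \<exists>n. (Adj ^^ n) x y)"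

definition gdist :: "('a \<Rightarrow> 'a \<Rightarrow> bool) \<Rightarrow> 'a \<Rightarrow> 'a \<Rightarrow> nat" where
  "gdist Adj x y = (LEAST n. (Adj ^^ n) x y)"

definition interval :: "'a set \<Rightarrow> ('a \<Rightarrow> 'a \<Rightarrow> bool) \<Rightarrow> 'a \<Rightarrow> 'a \<Rightarrow> 'a set" where
  "interval V Adj u w = {t \<in> V. gdist Adj u t + gdist Adj t w = gdist Adj u w}"

definition median_graph :: "'a set \<Rightarrow> ('a \<Rightarrow> 'a \<Rightarrow> bool) \<Rightarrow> bool" where
  "median_graph V Adj \<longleftrightarrow> simple_graph V Adj \<and> connected_graph V Adj \<and>
     (\<forall>x\<in>V. \<forall>y\<in>V. \<forall>z\<in>V. \<exists>!m.
        m \<in> interval V Adj x y \<inter> interval V Adj y z \<inter> interval V Adj z x)"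

definition convex_set :: "'a set \<Rightarrow> ('a \<Rightarrow> 'a \<Rightarrow> bool) \<Rightarrow> 'a set \<Rightarrow> bool" where
  "convex_set V Adj S \<longleftrightarrow> S \<subseteq> V \<and> (\<forall>x\<in>S. \<forall>y\<in>S. interval V Adj x y \<subseteq> S)"

definition basepoint_le :: "'a set \<Rightarrow> ('a \<Rightarrow> 'a \<Rightarrow> bool) \<Rightarrow> 'a \<Rightarrow> 'a \<Rightarrow> 'a \<Rightarrow> bool" where
  "basepoint_le V Adj v x y \<longleftrightarrow> x \<in> interval V Adj v y"

definition directed_median_graph ::
  "'a set \<Rightarrow> ('a \<Rightarrow> 'a \<Rightarrow> bool) \<Rightarrow> ('a \<Rightarrow> 'a \<Rightarrow> bool) \<Rightarrow> bool" where
  "directed_median_graph V Adj D \<longleftrightarrow> median_graph V Adj \<and>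
     (\<forall>x y. D x y \<longrightarrow> Adj x y) \<and>
     (\<forall>x y. Adj x y \<longrightarrow> (D x y \<or> D y x)) \<and>
     (\<forall>x y. D x y \<longrightarrow> \<not> D y x) \<and>
     (\<forall>x1 x2 x3 x4. distinct [x1, x2, x3, x4] \<and> Adj x1 x2 \<and> Adj x2 x3 \<and> Adj x3 x4 \<and> Adj x4 x1
        \<longrightarrow> (D x1 x2 \<longleftrightarrow> D x4 x3))"

definition dir_le :: "('a \<Rightarrow> 'a \<Rightarrow> bool) \<Rightarrow> 'a \<Rightarrow> 'a \<Rightarrow> bool" where
  "dir_le D x y \<longleftrightarrow> D\<^sup>*\<^sup>* x y"

definition principal_filter :: "'a set \<Rightarrow> ('a \<Rightarrow> 'a \<Rightarrow> bool) \<Rightarrow> 'a \<Rightarrow> 'a set" where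
  "principal_filter V D v = {x \<in> V. dir_le D v x}"

definition event_structure :: "'e set \<Rightarrow> ('e \<Rightarrow> 'e \<Rightarrow> bool) \<Rightarrow> ('e \<Rightarrow> 'e \<Rightarrow> bool) \<Rightarrow> bool" where
  "event_structure E le cf \<longleftrightarrow>
     (\<forall>e\<in>E. le e e) \<and>
     (\<forall>e\<in>E. \<forall>e'\<in>E. le e e' \<and> le e' e \<longrightarrow> e = e') \<and>
     (\<forall>e\<in>E. \<forall>e'\<in>E. \<forall>e''\<in>E. le e e' \<and> le e' e'' \<longrightarrow> le e e'') \<and>
     (\<forall>e\<in>E. finite {e'\<in>E. le e' e}) \<and>
     (\<forall>e\<in>E. \<not> cf e e) \<and>
     (\<forall>e\<in>E. \<forall>e'\<in>E. cf e e' \<longrightarrow> cf e' e) \<and>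
     (\<forall>e\<in>E. \<forall>e'\<in>E. \<forall>e''\<in>E. cf e e' \<and> le e' e'' \<longrightarrow> cf e e'')"

definition configurations :: "'e set \<Rightarrow> ('e \<Rightarrow> 'e \<Rightarrow> bool) \<Rightarrow> ('e \<Rightarrow> 'e \<Rightarrow> bool) \<Rightarrow> 'e set set" where
  "configurations E le cf = {C. C \<subseteq> E \<and> finite C \<and>
      (\<forall>e\<in>C. \<forall>e'\<in>E. le e' e \<longrightarrow> e' \<in> C) \<and>
      (\<forall>e\<in>C. \<forall>e'\<in>C. \<not> cf e e')}"

end

theory Submission imports Defs begin

locale dmg =
  fixes V :: "'a set" and Adj D :: "'a \<Rightarrow> 'a \<Rightarrow> bool"
  assumes dmg: "directed_median_graph V Adj D"
begin

abbreviation d where "d \<equiv> gdist Adj"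
definition W where "W a b = {z\<in>V. d z a < d z b}"

lemma sg: "simple_graph V Adj" and cg: "connected_graph V Adj"
  using dmg unfolding directed_median_graph_def median_graph_def by auto

lemma adjV: "Adj x y \<Longrightarrow> x \<in> V \<and> y \<in> V" using sg unfolding simple_graph_def by blast
lemma adj_sym: "Adj x y \<Longrightarrow> Adj y x" using sg unfolding simple_graph_def by blast
lemma adj_irr: "\<not> Adj x x" using sg unfolding simple_graph_def by blast

lemma D_adj: "D x y \<Longrightarrow> Adj x y" using dmg unfolding directed_median_graph_def by blast
lemma D_asym: "D x y \<Longrightarrow> \<not> D y x" using dmg unfolding directed_median_graph_def by blast
lemma D_sq: "distinct [x1, x2, x3, x4] \<Longrightarrow> Adj x1 x2 \<Longrightarrow> Adj x2 x3 \<Longrightarrow> Adj x3 x4 \<Longrightarrow> Adj x4 x1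
        \<Longrightarrow> (D x1 x2 \<longleftrightarrow> D x4 x3)"
  using dmg unfolding directed_median_graph_def by blast

lemma relpow_sym: "(Adj ^^ n) x y \<Longrightarrow> (Adj ^^ n) y x"
proof (induction n arbitrary: x y)
  case 0 then show ?case by simp
next
  case (Suc n)
  from Suc.prems obtain z where "(Adj ^^ n) x z" "Adj z y" by (rule relpowp_Suc_E)
  then have "(Adj ^^ n) z x" "Adj y z" using Suc.IH adj_sym by auto
  then show ?case by (meson relpowp_Suc_I2)
qed

lemma pow1[simp]: "(Adj ^^ 1) = Adj" by (simp only: One_nat_def relpowp_Suc_0)

lemma conn: "x \<in> V \<Longrightarrow> y \<in> V \<Longrightarrow> \<exists>n. (Adj ^^ n) x y"
  using cg unfolding connected_graph_def by blast

lemma dpath: "x \<in> V \<Longrightarrow> y \<in> V \<Longrightarrow> (Adj ^^ d x y) x y"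
  unfolding gdist_def using conn by (metis LeastI_ex)

lemma dle: "(Adj ^^ n) x y \<Longrightarrow> d x y \<le> n"
  unfolding gdist_def by (rule Least_le)

lemma d_refl[simp]: "d x x = 0"
  using dle[of 0 x x] by simp

lemma d0: "x \<in> V \<Longrightarrow> y \<in> V \<Longrightarrow> d x y = 0 \<Longrightarrow> x = y"
  using dpath[of x y] by simp

lemma d_sym: "x \<in> V \<Longrightarrow> y \<in> V \<Longrightarrow> d x y = d y x"
  using dpath dle relpow_sym by (metis le_antisym)

lemma tri: "x \<in> V \<Longrightarrow> y \<in> V \<Longrightarrow> z \<in> V \<Longrightarrow> d x z \<le> d x y + d y z"
proof -
  assume a: "x \<in> V" "y \<in> V" "z \<in> V"
  have "(Adj ^^ (d x y + d y z)) x z" unfolding relpowp_add using dpath[OF a(1,2)] dpath[OF a(2,3)] by blast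
  then show ?thesis by (rule dle)
qed

lemma d_adj: "Adj x y \<Longrightarrow> d x y = 1"
proof -
  assume a: "Adj x y"
  have "d x y \<le> 1" using dle[of 1 x y] a by (simp only: pow1)
  moreover have "d x y \<noteq> 0" using d0 adjV a adj_irr by metis
  ultimately show ?thesis by simp
qed

lemma adj_le: "Adj x y \<Longrightarrow> z \<in> V \<Longrightarrow> d z y \<le> d z x + 1"
  using tri adjV d_adj by metis

lemma adj_le': "Adj x y \<Longrightarrow> z \<in> V \<Longrightarrow> d y z \<le> d x z + 1"
  using adj_le adjV d_sym by metis

lemma last_step: "x \<in> V \<Longrightarrow> y \<in> V \<Longrightarrow> x \<noteq> y \<Longrightarrow> \<exists>z. Adj z y \<and> d x z + 1 = d x y"
proof -
  assume a: "x \<in> V" "y \<in> V" "x \<noteq> y"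
  have p: "(Adj ^^ d x y) x y" using dpath a by blast
  have "d x y \<noteq> 0" using a d0 by blast
  then obtain k where k: "d x y = Suc k" by (cases "d x y") auto
  with p obtain z where z: "(Adj ^^ k) x z" "Adj z y" by (metis relpowp_Suc_E)
  have "d x z \<le> k" using z dle by blast
  moreover have "d x y \<le> d x z + 1" using adj_le z a by blast
  ultimately show ?thesis using z k by (intro exI[of _ z]) auto
qed

lemma first_step: "x \<in> V \<Longrightarrow> y \<in> V \<Longrightarrow> x \<noteq> y \<Longrightarrow> \<exists>z. Adj x z \<and> d z y + 1 = d x y"
  using last_step[of y x] d_sym adj_sym adjV by metis

definition I where "I x y = interval V Adj x y"

lemma I_iff: "t \<in> I x y \<longleftrightarrow> t \<in> V \<and> d x t + d t y = d x y"
  unfolding I_def interval_def by auto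

lemma I_sym: "x \<in> V \<Longrightarrow> y \<in> V \<Longrightarrow> t \<in> I x y \<Longrightarrow> t \<in> I y x"
  unfolding I_iff using d_sym by (metis add.commute)

lemma median: "x \<in> V \<Longrightarrow> y \<in> V \<Longrightarrow> z \<in> V \<Longrightarrow>
   \<exists>!m. m \<in> I x y \<and> m \<in> I y z \<and> m \<in> I z x"
  using dmg unfolding directed_median_graph_def median_graph_def I_def by blast

lemma bip: "Adj x y \<Longrightarrow> z \<in> V \<Longrightarrow> d z x \<noteq> d z y"
proof
  assume a: "Adj x y" "z \<in> V" and e: "d z x = d z y"
  have xy: "x \<in> V" "y \<in> V" using adjV a by auto
  obtain m where m: "m \<in> I z x" "m \<in> I x y" "m \<in> I y z" using median[OF a(2) xy] by blast
  have dxy: "d x y = 1" using d_adj a by simp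
  have mV: "m \<in> V" using m I_iff by blast
  have "d x m + d m y = 1" using m(2) dxy I_iff by simp
  then have "d x m = 0 \<or> d m y = 0" by arith
  then have "m = x \<or> m = y" using d0 mV xy by metis
  then show False
  proof
    assume "m = x"
    then have "d y x + d x z = d y z" using m(3) I_iff by simp
    moreover have "d y x = 1" using d_adj adj_sym[OF a(1)] by simp
    moreover have "d x z = d y z" using e d_sym xy a(2) by metis
    ultimately show False by simp
  next
    assume "m = y"
    then have "d z y + d y x = d z x" using m(1) I_iff by simp
    moreover have "d y x = 1" using d_adj adj_sym[OF a(1)] by simp
    ultimately show False using e by simp
  qed
qed

lemma dist2: "Adj x t \<Longrightarrow> Adj t y \<Longrightarrow> x \<noteq> y \<Longrightarrow> d x y = 2"
proof -
  assume a: "Adj x t" "Adj t y" "x \<noteq> y"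
  have V: "x \<in> V" "y \<in> V" "t \<in> V" using a adjV by auto
  have "d x y \<le> d x t + d t y" using tri V by blast
  then have "d x y \<le> 2" using d_adj a by simp
  moreover have "d x y \<noteq> 0" using d0 V a by blast
  moreover have "d x t \<noteq> d x y" using bip[of t y x] a V d_adj by blast
  ultimately show ?thesis using d_adj a by simp
qed

lemma common_nb: "d a c = 2 \<Longrightarrow> t \<in> I a c \<Longrightarrow> a \<in> V \<Longrightarrow> c \<in> V \<Longrightarrow> t \<noteq> a \<Longrightarrow> t \<noteq> c \<Longrightarrow> Adj a t \<and> Adj t c"
proof -
  assume a: "d a c = 2" "t \<in> I a c" "a \<in> V" "c \<in> V" "t \<noteq> a" "t \<noteq> c"
  have tV: "t \<in> V" using a I_iff by blast
  have s: "d a t + d t c = 2" using a I_iff by simp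
  have "d a t \<noteq> 0" using d0 a tV by metis
  moreover have "d t c \<noteq> 0" using d0 a tV by metis
  ultimately have "d a t = 1" "d t c = 1" using s by arith+
  then show ?thesis using dpath[OF a(3) tV] dpath[OF tV a(4)] by (simp only: pow1)
qed

lemma dich: "Adj a b \<Longrightarrow> z \<in> V \<Longrightarrow> (d z a < d z b \<and> d z b = d z a + 1) \<or> (d z b < d z a \<and> d z a = d z b + 1)"
  using bip[of a b z] adj_le[of a b z] adj_le[of b a z] adj_sym by fastforce

lemma W_iff: "z \<in> W a b \<longleftrightarrow> z \<in> V \<and> d z a < d z b" unfolding W_def by simp

end

context dmg begin

definition par where "par k a b a' b' \<longleftrightarrow> Adj a b \<and> Adj a' b' \<and> d a a' = k \<and> d b b' = k \<and> d a b' = k+1 \<and> d b a' = k+1"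

lemma sq_step:
  assumes p: "par (Suc k) a b a' b'"
  shows "\<exists>a1 b1. Adj a a1 \<and> Adj b b1 \<and> Adj a1 b1 \<and> a \<noteq> b1 \<and> b \<noteq> a1 \<and> a1 \<noteq> b1 \<and> a \<noteq> a1 \<and> b \<noteq> b1 \<and> a \<noteq> b \<and> par k a1 b1 a' b'"
proof -
  have ab: "Adj a b" "Adj a' b'" and ds: "d a a' = Suc k" "d b b' = Suc k" "d a b' = Suc k + 1" "d b a' = Suc k + 1"
    using p unfolding par_def by auto
  have V: "a \<in> V" "b \<in> V" "a' \<in> V" "b' \<in> V" using ab adjV by auto
  have "a \<noteq> a'" using ds d_refl by (metis Zero_not_Suc)
  then obtain a1 where a1: "Adj a a1" "d a1 a' + 1 = d a a'" using first_step V by blast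
  have a1V: "a1 \<in> V" using a1 adjV by auto
  have ne1: "a1 \<noteq> b" using a1 ds by auto
  have da1b: "d a1 b = 2" using dist2[OF adj_sym[OF a1(1)] ab(1) ne1] .
  have "d a1 b' \<le> d a1 a' + d a' b'" using tri a1V V by blast
  moreover have "d a b' \<le> d a a1 + d a1 b'" using tri a1V V by blast
  moreover have "d a a1 = 1" "d a' b' = 1" using d_adj ab a1 by auto
  ultimately have da1b': "d a1 b' = Suc k" using a1 ds by simp
  obtain m where m: "m \<in> I b a1" "m \<in> I a1 b'" "m \<in> I b' b" using median[OF V(2) a1V V(4)] by blast
  have mV: "m \<in> V" using m I_iff by blast
  have "m \<noteq> b"
  proof
    assume "m = b"
    then have "d a1 b + d b b' = d a1 b'" using m(2) I_iff by simp
    then show False using da1b da1b' ds by simp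
  qed
  moreover have "m \<noteq> a1"
  proof
    assume "m = a1"
    then have "d b' a1 + d a1 b = d b' b" using m(3) I_iff by simp
    then show False using da1b da1b' ds d_sym V a1V by simp
  qed
  ultimately have mn: "Adj b m" "Adj m a1" using common_nb[OF da1b[unfolded d_sym[OF a1V V(2)]] m(1) V(2) a1V] by auto
  have "d b m + d m b' = d b b'" using m(3) I_iff d_sym V mV by (metis add.commute)
  moreover have "d b m = 1" using d_adj mn by simp
  ultimately have dmb': "d m b' = k" using ds by simp
  have "d m a' \<le> d m b' + d b' a'" using tri mV V by blast
  moreover have "d b a' \<le> d b m + d m a'" using tri mV V by blast
  moreover have "d b m = 1" "d b' a' = 1" using d_adj mn ab adj_sym by auto
  ultimately have dma': "d m a' = k + 1" using dmb' ds by simp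
  have "a \<noteq> m" using ds dmb' by auto
  moreover have "a \<noteq> a1" "b \<noteq> m" "a1 \<noteq> m" "a \<noteq> b" using a1 mn ab adj_irr by auto
  moreover have "Adj a1 m" using adj_sym[OF mn(2)] .
  moreover have "d a1 a' = k" using a1 ds by simp
  moreover have "par k a1 m a' b'" unfolding par_def using calculation da1b' dmb' dma' ab by simp
  ultimately show ?thesis using a1 mn ne1 by (intro exI[of _ a1] exI[of _ m]) simp
qed

lemma par_orient: "par k a b a' b' \<Longrightarrow> (D a b \<longleftrightarrow> D a' b')"
proof (induction k arbitrary: a b)
  case 0
  then have "a = a'" "b = b'" using d0 adjV unfolding par_def by auto
  then show ?case by simp
next
  case (Suc k)
  obtain a1 b1 where s: "Adj a a1" "Adj b b1" "Adj a1 b1" "a \<noteq> b1" "b \<noteq> a1" "a1 \<noteq> b1" "a \<noteq> a1" "b \<noteq> b1" "a \<noteq> b" "par k a1 b1 a' b'"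
    using sq_step[OF Suc.prems] by blast
  have "Adj a b" using Suc.prems unfolding par_def by auto
  then have "D a b \<longleftrightarrow> D a1 b1" using D_sq[of a b b1 a1] s adj_sym[OF s(3)] adj_sym[OF s(1)] by auto
  then show ?case using Suc.IH s by blast
qed

lemma sq_half:
  assumes e: "Adj a b" "Adj b b1" "Adj b1 a1" "Adj a1 a" "a \<noteq> b1" "b \<noteq> a1" and z: "z \<in> V"
    and h: "d z a < d z b"
  shows "d z a1 < d z b1"
proof (rule ccontr)
  assume "\<not> ?thesis"
  then have h2: "d z b1 < d z a1" using bip[OF e(3) z] by simp
  have V: "a \<in> V" "b \<in> V" "a1 \<in> V" "b1 \<in> V" using e adjV by auto
  have r: "d z b1 = d z a" "d z a1 = d z a + 1"
    using adj_le[OF e(1) z] adj_le[OF e(2) z] adj_le[OF adj_sym[OF e(2)] z] adj_le[OF e(3) z]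
      adj_le[OF e(4) z] adj_le[OF adj_sym[OF e(4)] z] h h2 by linarith+
  have dab1: "d a b1 = 2" using dist2[OF e(1,2,5)] .
  obtain m where m: "m \<in> I z a" "m \<in> I a b1" "m \<in> I b1 z" using median[OF z V(1) V(4)] by blast
  have mV: "m \<in> V" using m I_iff by blast
  have "m \<noteq> a"
  proof
    assume "m = a"
    then have "d b1 a + d a z = d b1 z" using m(3) I_iff by simp
    moreover have "d b1 a = 2" "d a z = d z a" "d b1 z = d z b1" using dab1 d_sym V z by auto
    ultimately show False using r by simp
  qed
  moreover have "m \<noteq> b1"
  proof
    assume "m = b1"
    then have "d z b1 + d b1 a = d z a" using m(1) I_iff by simp
    moreover have "d b1 a = 2" using dab1 d_sym V by auto
    ultimately show False using r by simp
  qed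
  ultimately have mn: "Adj a m" "Adj m b1" using common_nb[OF dab1 m(2) V(1) V(4)] by auto
  have "d z m + 1 = d z a" using m(1) d_adj[OF adj_sym[OF mn(1)]] I_iff by simp
  then have mb: "m \<noteq> b" "m \<noteq> a1" using r h dich[OF e(1) z] by auto
  have b1b: "Adj b1 b" "Adj a a1" "Adj b1 m" using e mn adj_sym by auto
  obtain m' where "m' \<in> I b a1" "m' \<in> I a1 m" "m' \<in> I m b"
    and uq: "\<And>m''. m'' \<in> I b a1 \<and> m'' \<in> I a1 m \<and> m'' \<in> I m b \<Longrightarrow> m'' = m'"
    using median[OF V(2) V(3) mV] by blast
  have d2: "d b a1 = 2" "d a1 m = 2" "d m b = 2"
    using dist2[OF adj_sym[OF e(1)] b1b(2) e(6)] dist2[OF e(4) mn(1)] dist2[OF adj_sym[OF mn(1)] e(1)] mb by auto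
  have ina: "a \<in> I b a1 \<and> a \<in> I a1 m \<and> a \<in> I m b"
    unfolding I_iff using d2 V d_adj e mn adj_sym by (simp add: d_adj)
  have inb: "b1 \<in> I b a1 \<and> b1 \<in> I a1 m \<and> b1 \<in> I m b"
    unfolding I_iff using d2 V d_adj e mn adj_sym by (simp add: d_adj)
  show False using uq[OF ina] uq[OF inb] e(5) by simp
qed

lemma par_half: "par k a b a' b' \<Longrightarrow> z \<in> V \<Longrightarrow> (d z a < d z b \<longleftrightarrow> d z a' < d z b')"
proof (induction k arbitrary: a b)
  case 0
  then have "a = a'" "b = b'" using d0 adjV unfolding par_def by auto
  then show ?case by simp
next
  case (Suc k)
  obtain a1 b1 where s: "Adj a a1" "Adj b b1" "Adj a1 b1" "a \<noteq> b1" "b \<noteq> a1" "a1 \<noteq> b1" "a \<noteq> a1" "b \<noteq> b1" "a \<noteq> b" "par k a1 b1 a' b'"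
    using sq_step[OF Suc.prems(1)] by blast
  have ab: "Adj a b" using Suc.prems unfolding par_def by auto
  have "d z a < d z b \<longleftrightarrow> d z a1 < d z b1"
  proof
    assume "d z a < d z b" then show "d z a1 < d z b1"
      using sq_half[OF ab s(2) adj_sym[OF s(3)] adj_sym[OF s(1)] s(4) s(5) Suc.prems(2)] by blast
  next
    assume "d z a1 < d z b1" then show "d z a < d z b"
      using sq_half[OF s(3) adj_sym[OF s(2)] adj_sym[OF ab] s(1)] s Suc.prems(2) by metis
  qed
  then show ?case using Suc.IH[OF s(10) Suc.prems(2)] by blast
qed

lemma W_par: "par k a b a' b' \<Longrightarrow> W a b = W a' b' \<and> W b a = W b' a'"
proof -
  assume p: "par k a b a' b'"
  have e: "Adj a b" "Adj a' b'" using p par_def by auto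
  have 1: "W a b = W a' b'" unfolding W_def using par_half[OF p] by auto
  have "z \<in> W b a \<longleftrightarrow> z \<in> W b' a'" for z
  proof (cases "z \<in> V")
    case True
    then show ?thesis unfolding W_iff using par_half[OF p True] bip[OF e(1) True] bip[OF e(2) True] by linarith
  qed (simp add: W_iff)
  then have "W b a = W b' a'" by blast
  then show ?thesis using 1 by simp
qed

lemma cross: "Adj a b \<Longrightarrow> Adj p q \<Longrightarrow> p \<in> W a b \<Longrightarrow> q \<in> W b a \<Longrightarrow> par (d a p) a b p q"
proof -
  assume e: "Adj a b" "Adj p q" "p \<in> W a b" "q \<in> W b a"
  have V: "a \<in> V" "b \<in> V" "p \<in> V" "q \<in> V" using e adjV by auto
  have h: "d p a < d p b" "d q b < d q a" using e W_iff by auto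
  have 1: "d p b = d p a + 1" "d q a = d q b + 1" using dich[OF e(1) V(3)] dich[OF e(1) V(4)] h by auto
  have 2: "d q a \<le> d p a + 1" "d p a \<le> d q a + 1" "d q b \<le> d p b + 1" "d p b \<le> d q b + 1"
    using adj_le' e(2) adj_sym V by blast+
  have 3: "d q a \<noteq> d p a" using bip[OF e(2) V(1)] d_sym V by metis
  have "d q a = d p a + 1" "d q b = d p a" using 1 2 3 by arith+
  moreover have "d a p = d p a" "d b q = d q b" "d a q = d q a" "d b p = d p b" using d_sym V by auto
  ultimately show ?thesis unfolding par_def using e 1 by auto
qed

lemma Wdisj: "z \<in> W a b \<Longrightarrow> z \<notin> W b a" unfolding W_iff by auto

lemma Wdich: "Adj a b \<Longrightarrow> z \<in> V \<Longrightarrow> z \<notin> W a b \<Longrightarrow> z \<in> W b a"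
  unfolding W_iff using bip by (metis nat_neq_iff)

lemma crossK: "n = d x t \<Longrightarrow> Adj a b \<Longrightarrow> x \<in> W a b \<Longrightarrow> t \<in> W b a \<Longrightarrow>
  \<exists>p q. Adj p q \<and> p \<in> W a b \<and> q \<in> W b a \<and> d x p + 1 + d q t = d x t"
proof (induction n arbitrary: x)
  case 0
  then have "x = t" using d0 W_iff by metis
  then show ?case using 0 Wdisj by blast
next
  case (Suc n)
  have V: "x \<in> V" "t \<in> V" using Suc.prems W_iff by auto
  have "x \<noteq> t" using Suc.prems Wdisj by blast
  then obtain x1 where x1: "Adj x x1" "d x1 t + 1 = d x t" using first_step V by blast
  have x1V: "x1 \<in> V" using x1 adjV by auto
  show ?case
  proof (cases "x1 \<in> W b a")
    case True
    then show ?thesis using x1 Suc.prems by (intro exI[of _ x] exI[of _ x1]) (auto simp: d_adj)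
  next
    case False
    then have "x1 \<in> W a b" using Wdich[OF adj_sym[OF Suc.prems(2)] x1V] by blast
    then obtain p q where pq: "Adj p q" "p \<in> W a b" "q \<in> W b a" "d x1 p + 1 + d q t = d x1 t"
      using Suc.IH[of x1] x1 Suc.prems by auto
    have pqV: "p \<in> V" "q \<in> V" using pq adjV by auto
    have "d x p \<le> d x x1 + d x1 p" using tri V x1V pqV by blast
    moreover have "d x t \<le> d x p + d p t" "d p t \<le> d p q + d q t" using tri V pqV by blast+
    ultimately show ?thesis using pq x1 d_adj by (intro exI[of _ p] exI[of _ q]) auto
  qed
qed

lemma W_convex: "Adj a b \<Longrightarrow> x \<in> W a b \<Longrightarrow> y \<in> W a b \<Longrightarrow> t \<in> I x y \<Longrightarrow> t \<in> W a b"
proof (rule ccontr)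
  assume a: "Adj a b" "x \<in> W a b" "y \<in> W a b" "t \<in> I x y" "t \<notin> W a b"
  have V: "x \<in> V" "y \<in> V" "t \<in> V" using a W_iff I_iff by auto
  have tb: "t \<in> W b a" using Wdich a V by blast
  obtain p q where pq: "Adj p q" "p \<in> W a b" "q \<in> W b a" "d x p + 1 + d q t = d x t"
    using crossK[OF refl a(1,2) tb] by blast
  obtain p' q' where pq': "Adj p' q'" "p' \<in> W a b" "q' \<in> W b a" "d y p' + 1 + d q' t = d y t"
    using crossK[OF refl a(1,3) tb] by blast
  have P: "par (d a p) a b p q" using cross a(1) pq by blast
  have WW: "W a b = W p q" "W b a = W q p" using W_par[OF P] by auto
  have P2: "par (d p p') p q p' q'" using cross[OF pq(1) pq'(1)] pq' WW by simp
  have e: "d p p' = d q q'" using P2 unfolding par_def by simp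
  have pV: "p \<in> V" "q \<in> V" "p' \<in> V" "q' \<in> V" using pq pq' adjV by auto
  have "d x y \<le> d x p + d p y" "d p y \<le> d p p' + d p' y" using tri V pV by blast+
  moreover have "d q q' \<le> d q t + d t q'" using tri V pV by blast
  moreover have "d x y = d x t + d t y" using a(4) I_iff by simp
  moreover have "d p' y = d y p'" "d t q' = d q' t" "d t y = d y t" using d_sym V pV by auto
  ultimately show False using pq(4) pq'(4) e by linarith
qed

end

locale dmgv = dmg + fixes v assumes vV: "v \<in> V"
begin

abbreviation F where "F \<equiv> principal_filter V D v"

definition cond where "cond x \<longleftrightarrow> (\<forall>a b. Adj a b \<and> d v a < d v b \<and> d x b < d x a \<longrightarrow> D a b)"

lemma F_iff: "x \<in> F \<longleftrightarrow> x \<in> V \<and> D\<^sup>*\<^sup>* v x" unfolding principal_filter_def dir_le_def by simp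

lemma F_cond: "D\<^sup>*\<^sup>* v y \<Longrightarrow> cond y"
proof (induction rule: rtranclp_induct)
  case base
  then show ?case unfolding cond_def by auto
next
  case (step y' y)
  have e: "Adj y' y" using D_adj step by blast
  have V: "y' \<in> V" "y \<in> V" using adjV e by auto
  show ?case unfolding cond_def
  proof (intro allI impI)
    fix a b assume h: "Adj a b \<and> d v a < d v b \<and> d y b < d y a"
    show "D a b"
    proof (cases "d y' b < d y' a")
      case True then show ?thesis using step.IH h unfolding cond_def by blast
    next
      case False
      then have "y' \<in> W a b" using bip[of a b y'] h V W_iff by (metis nat_neq_iff)
      moreover have "y \<in> W b a" using h V W_iff by blast
      ultimately have "par (d a y') a b y' y" using cross h e by blast
      then show ?thesis using par_orient step by blast
    qed
  qed
qed

lemma cond_F: "n = d v x \<Longrightarrow> x \<in> V \<Longrightarrow> cond x \<Longrightarrow> D\<^sup>*\<^sup>* v x"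
proof (induction n arbitrary: x rule: less_induct)
  case (less n)
  show ?case
  proof (cases "x = v")
    case True then show ?thesis by simp
  next
    case False
    then obtain x' where x': "Adj x' x" "d v x' + 1 = d v x" using last_step vV less by metis
    have x'V: "x' \<in> V" using adjV x' by auto
    have "d x x' = 1" using d_adj adj_sym[OF x'(1)] by blast
    then have Dx: "D x' x" using less.prems(3) x' unfolding cond_def by auto
    have "cond x'" unfolding cond_def
    proof (intro allI impI)
      fix a b assume h: "Adj a b \<and> d v a < d v b \<and> d x' b < d x' a"
      show "D a b"
      proof (cases "d x b < d x a")
        case True then show ?thesis using less.prems h unfolding cond_def by blast
      next
        case False
        then have "x \<in> W a b" using bip[of a b x] h less.prems W_iff by (metis nat_neq_iff)
        moreover have "x' \<in> W b a" using h x'V W_iff by blast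
        ultimately have "par (d a x) a b x x'" using cross h adj_sym[OF x'(1)] by blast
        then have "d v a < d v b \<longleftrightarrow> d v x < d v x'" using par_half vV by blast
        then show ?thesis using h x' by simp
      qed
    qed
    moreover have "d v x' < n" using less.prems(1) x' by simp
    ultimately have "D\<^sup>*\<^sup>* v x'" using less.IH x'V by blast
    then show ?thesis using Dx by simp
  qed
qed

lemma F_cond_iff: "x \<in> F \<longleftrightarrow> x \<in> V \<and> cond x"
  using F_iff F_cond cond_F by blast

lemma F_step: "x \<in> F \<Longrightarrow> D x z \<Longrightarrow> d v z = d v x + 1"
proof -
  assume a: "x \<in> F" "D x z"
  have e: "Adj x z" using D_adj a by blast
  have V: "x \<in> V" "z \<in> V" using adjV e by auto
  have "\<not> (d v z < d v x)"
  proof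
    assume h: "d v z < d v x"
    have "cond x" using a F_cond_iff by blast
    then have "D z x" unfolding cond_def using h adj_sym[OF e] d_adj[OF e] d_sym V by fastforce
    then show False using D_asym a by blast
  qed
  then show ?thesis using dich[OF e vV] by auto
qed

lemma F_closed: "x \<in> F \<Longrightarrow> D x z \<Longrightarrow> z \<in> F"
  using F_iff D_adj adjV by (meson rtranclp.rtrancl_into_rtrancl)

lemma dir_dist: "D\<^sup>*\<^sup>* x y \<Longrightarrow> x \<in> F \<Longrightarrow> y \<in> F \<and> d v x + d x y \<le> d v y"
proof (induction rule: rtranclp_induct)
  case base then show ?case by simp
next
  case (step y z)
  have e: "Adj y z" using D_adj step by blast
  have V: "x \<in> V" "y \<in> V" "z \<in> V" using adjV e step F_iff by auto
  have "z \<in> F" using F_closed step by blast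
  moreover have "d v z = d v y + 1" using F_step step by blast
  moreover have "d x z \<le> d x y + 1" using adj_le e V by blast
  ultimately show ?case using step by simp
qed

lemma dir_I: "x \<in> F \<Longrightarrow> D\<^sup>*\<^sup>* x y \<Longrightarrow> x \<in> I v y"
proof -
  assume a: "x \<in> F" "D\<^sup>*\<^sup>* x y"
  have "y \<in> F" "d v x + d x y \<le> d v y" using dir_dist a by auto
  moreover have "x \<in> V" "y \<in> V" using a calculation F_iff by auto
  moreover have "d v y \<le> d v x + d x y" using tri vV calculation by blast
  ultimately show ?thesis unfolding I_iff by simp
qed

lemma F_down: "y \<in> F \<Longrightarrow> t \<in> I v y \<Longrightarrow> t \<in> F"
proof -
  assume a: "y \<in> F" "t \<in> I v y"
  have V: "t \<in> V" "y \<in> V" using a I_iff F_iff by auto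
  have "cond t" unfolding cond_def
  proof (intro allI impI)
    fix a b assume h: "Adj a b \<and> d v a < d v b \<and> d t b < d t a"
    show "D a b"
    proof (cases "d y b < d y a")
      case True then show ?thesis using a F_cond_iff h unfolding cond_def by blast
    next
      case False
      then have "y \<in> W a b" using bip[of a b y] h V W_iff by (metis nat_neq_iff)
      moreover have "v \<in> W a b" using h vV W_iff by blast
      ultimately have "t \<in> W a b" using W_convex h a by blast
      then show ?thesis using h W_iff by auto
    qed
  qed
  then show ?thesis using F_cond_iff V by blast
qed

lemma F_convex: "x \<in> F \<Longrightarrow> y \<in> F \<Longrightarrow> t \<in> I x y \<Longrightarrow> t \<in> F"
proof -
  assume a: "x \<in> F" "y \<in> F" "t \<in> I x y"
  have V: "t \<in> V" "y \<in> V" "x \<in> V" using a I_iff F_iff by auto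
  have "cond t" unfolding cond_def
  proof (intro allI impI)
    fix a b assume h: "Adj a b \<and> d v a < d v b \<and> d t b < d t a"
    show "D a b"
    proof (cases "d y b < d y a \<or> d x b < d x a")
      case True then show ?thesis using a F_cond_iff h unfolding cond_def by blast
    next
      case False
      then have "y \<in> W a b" "x \<in> W a b" using bip[of a b y] bip[of a b x] h V W_iff by (metis nat_neq_iff)+
      then have "t \<in> W a b" using W_convex h a by blast
      then show ?thesis using h W_iff by auto
    qed
  qed
  then show ?thesis using F_cond_iff V by blast
qed

lemma I_dir: "n = d x y \<Longrightarrow> x \<in> F \<Longrightarrow> y \<in> F \<Longrightarrow> x \<in> I v y \<Longrightarrow> D\<^sup>*\<^sup>* x y"
proof (induction n arbitrary: y)
  case 0
  then have "x = y" using d0 F_iff by metis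
  then show ?case by simp
next
  case (Suc n)
  have V: "x \<in> V" "y \<in> V" using Suc.prems F_iff by auto
  have "x \<noteq> y" using Suc.prems by auto
  then obtain y' where y': "Adj y' y" "d x y' + 1 = d x y" using last_step V by blast
  have y'V: "y' \<in> V" using adjV y' by auto
  have s: "d v x + d x y = d v y" using Suc.prems I_iff by simp
  have "d v y' \<le> d v x + d x y'" using tri vV V y'V by blast
  moreover have "d v y \<le> d v y' + 1" using adj_le y' vV by blast
  ultimately have dy': "d v y' + 1 = d v y" "d v x + d x y' = d v y'" using s y' by linarith+
  then have "y' \<in> I v y" using I_iff y'V d_adj[OF y'(1)] by simp
  then have y'F: "y' \<in> F" using F_down Suc.prems by blast
  have "x \<in> I v y'" using dy' I_iff V by simp
  then have "D\<^sup>*\<^sup>* x y'" using Suc.IH[of y'] y' Suc.prems y'F by simp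
  moreover have "D y' y"
  proof -
    have "cond y" using Suc.prems(3) F_cond_iff by blast
    moreover have "d y y' = 1" using d_adj adj_sym[OF y'(1)] by blast
    ultimately show ?thesis using y' dy' unfolding cond_def by auto
  qed
  ultimately show ?case by simp
qed

lemma part2: "x \<in> F \<Longrightarrow> y \<in> F \<Longrightarrow> dir_le D x y \<longleftrightarrow> basepoint_le V Adj v x y"
  unfolding dir_le_def basepoint_le_def I_def[symmetric] using dir_I I_dir by blast

lemma part1: "convex_set V Adj F"
  unfolding convex_set_def I_def[symmetric] using F_convex F_iff by blast

end

lemma Id_on_mem: "(x,x) \<in> Id_on H \<longleftrightarrow> x \<in> H" by auto
lemma Id_on_sub: "Id_on A \<subseteq> Id_on B \<longleftrightarrow> A \<subseteq> B" by auto
lemma Id_on_eq: "Id_on A = Id_on B \<longleftrightarrow> A = B" by auto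
lemma Id_on_int: "Id_on A \<inter> Id_on B = {} \<longleftrightarrow> A \<inter> B = {}" by auto

context dmgv begin

definition HS where "HS = {H. \<exists>a b. D a b \<and> a \<in> F \<and> b \<in> F \<and> H = W b a}"
definition EE where "EE = Id_on ` HS"
definition fx where "fx x = {e \<in> EE. (x,x) \<in> e}"

lemma HS_D: "H \<in> HS \<Longrightarrow> \<exists>a b. D a b \<and> a \<in> F \<and> b \<in> F \<and> H = W b a" unfolding HS_def by blast

lemma HS_I: "D a b \<Longrightarrow> a \<in> F \<Longrightarrow> b \<in> F \<Longrightarrow> W b a \<in> HS" unfolding HS_def by blast

lemma HS_v: "H \<in> HS \<Longrightarrow> v \<notin> H"
proof
  assume "H \<in> HS" "v \<in> H"
  then obtain a b where ab: "D a b" "a \<in> F" "b \<in> F" "H = W b a" using HS_D by blast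
  have "d v b = d v a + 1" using F_step ab by blast
  then show False using \<open>v \<in> H\<close> ab W_iff by auto
qed

lemma Wself: "Adj a b \<Longrightarrow> b \<in> W b a"
  using W_iff d_adj adj_sym adjV by (metis d_refl zero_less_one)

lemma HS_ne: "H \<in> HS \<Longrightarrow> \<exists>b. b \<in> H \<and> b \<in> F"
  using HS_D Wself D_adj by blast

lemma fin_S: "n = d v y \<Longrightarrow> y \<in> V \<Longrightarrow> finite {H. \<exists>p q. Adj p q \<and> H = W q p \<and> v \<notin> H \<and> y \<in> H}"
proof (induction n arbitrary: y rule: less_induct)
  case (less n)
  show ?case
  proof (cases "y = v")
    case True
    then have "{H. \<exists>p q. Adj p q \<and> H = W q p \<and> v \<notin> H \<and> y \<in> H} = {}" by blast
    then show ?thesis by (simp only: finite.emptyI)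
  next
    case False
    then obtain y' where y': "Adj y' y" "d v y' + 1 = d v y" using last_step vV less by metis
    have y'V: "y' \<in> V" using adjV y' by auto
    have fin: "finite {H. \<exists>p q. Adj p q \<and> H = W q p \<and> v \<notin> H \<and> y' \<in> H}"
      using less.IH[of "d v y'" y'] less.prems y' y'V by simp
    have "{H. \<exists>p q. Adj p q \<and> H = W q p \<and> v \<notin> H \<and> y \<in> H} \<subseteq>
       insert (W y y') {H. \<exists>p q. Adj p q \<and> H = W q p \<and> v \<notin> H \<and> y' \<in> H}"
    proof
      fix H assume "H \<in> {H. \<exists>p q. Adj p q \<and> H = W q p \<and> v \<notin> H \<and> y \<in> H}"
      then obtain p q where pq: "Adj p q" "H = W q p" "v \<notin> H" "y \<in> H" by blast
      show "H \<in> insert (W y y') {H. \<exists>p q. Adj p q \<and> H = W q p \<and> v \<notin> H \<and> y' \<in> H}"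
      proof (cases "y' \<in> H")
        case True then show ?thesis using pq by blast
      next
        case False
        then have "y' \<in> W p q" using Wdich[OF adj_sym[OF pq(1)] y'V] pq by blast
        then have "par (d p y') p q y' y" using cross[OF pq(1) y'(1)] pq by blast
        then have "W q p = W y y'" using W_par by blast
        then show ?thesis using pq by blast
      qed
    qed
    then show ?thesis using fin finite_subset by blast
  qed
qed

lemma fin_HS: "y \<in> V \<Longrightarrow> finite {H \<in> HS. y \<in> H}"
proof -
  assume y: "y \<in> V"
  have "{H \<in> HS. y \<in> H} \<subseteq> {H. \<exists>p q. Adj p q \<and> H = W q p \<and> v \<notin> H \<and> y \<in> H}"
    using HS_D HS_v D_adj by blast
  then show ?thesis using fin_S[OF refl y] finite_subset by blast
qed

lemma HS_W: "H \<in> HS \<Longrightarrow> H \<subseteq> V" using HS_D W_iff by blast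

lemma mono_HS: "y \<in> F \<Longrightarrow> x \<in> I v y \<Longrightarrow> H \<in> HS \<Longrightarrow> x \<in> H \<Longrightarrow> y \<in> H"
proof (rule ccontr)
  assume a: "y \<in> F" "x \<in> I v y" "H \<in> HS" "x \<in> H" "y \<notin> H"
  then obtain a b where ab: "D a b" "a \<in> F" "b \<in> F" "H = W b a" using HS_D by blast
  have e: "Adj b a" using adj_sym D_adj ab by blast
  have "y \<in> W a b" using Wdich[OF e] a ab F_iff by blast
  moreover have "v \<in> W a b" using Wdich[OF e vV] HS_v a ab by blast
  ultimately have "x \<in> W a b" using W_convex a(2) adj_sym[OF e] by blast
  then show False using a ab Wdisj by blast
qed

lemma sep_HS: "x \<in> F \<Longrightarrow> y \<in> F \<Longrightarrow> (\<forall>H\<in>HS. x \<in> H \<longrightarrow> y \<in> H) \<Longrightarrow> x \<in> I v y"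
proof -
  assume a: "x \<in> F" "y \<in> F" "\<forall>H\<in>HS. x \<in> H \<longrightarrow> y \<in> H"
  have V: "x \<in> V" "y \<in> V" using a F_iff by auto
  obtain m where m: "m \<in> I v x" "m \<in> I x y" "m \<in> I y v" using median[OF vV V] by blast
  have mV: "m \<in> V" using m I_iff by blast
  show ?thesis
  proof (cases "m = x")
    case True then show ?thesis using m(3) I_sym V vV by blast
  next
    case False
    then obtain x' where x': "Adj x' x" "d m x' + 1 = d m x" using last_step mV V by blast
    have x'V: "x' \<in> V" using adjV x' by auto
    have "d v x' \<le> d v m + d m x'" using tri vV mV x'V by blast
    moreover have "d v x \<le> d v x' + 1" using adj_le x' vV by blast
    moreover have "d v m + d m x = d v x" using m I_iff by simp
    ultimately have dx': "d v x' + 1 = d v x" using x' by linarith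
    then have "x' \<in> I v x" using I_iff x'V d_adj[OF x'(1)] by simp
    then have x'F: "x' \<in> F" using F_down a by blast
    have Dx: "D x' x"
    proof -
      have "cond x" using a F_cond_iff by blast
      moreover have "d x x' = 1" using d_adj adj_sym[OF x'(1)] by blast
      ultimately show ?thesis using x' dx' unfolding cond_def by auto
    qed
    then have "W x x' \<in> HS" using HS_I x'F a by blast
    moreover have "x \<in> W x x'" using Wself x' by blast
    ultimately have "y \<in> W x x'" using a by blast
    moreover have "m \<in> W x' x" using x' W_iff mV by simp
    ultimately have "m \<in> W x x'" using W_convex[OF adj_sym[OF x'(1)] \<open>x \<in> W x x'\<close>] m by blast
    then show ?thesis using \<open>m \<in> W x' x\<close> Wdisj by blast
  qed
qed

lemma fx_sub: "x \<in> F \<Longrightarrow> y \<in> F \<Longrightarrow> fx x \<subseteq> fx y \<longleftrightarrow> dir_le D x y"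
proof -
  assume a: "x \<in> F" "y \<in> F"
  have "fx x \<subseteq> fx y \<longleftrightarrow> (\<forall>H\<in>HS. x \<in> H \<longrightarrow> y \<in> H)"
    unfolding fx_def EE_def by (auto simp: Id_on_mem)
  also have "\<dots> \<longleftrightarrow> x \<in> I v y" using sep_HS mono_HS a by blast
  also have "\<dots> \<longleftrightarrow> dir_le D x y" using part2 a unfolding basepoint_le_def I_def by blast
  finally show ?thesis .
qed

end

context dmgv begin

lemma fx_v: "fx v = {}"
  unfolding fx_def EE_def using HS_v by (auto simp: Id_on_mem)

lemma surj_step:
  assumes y: "y \<in> F" and H: "H \<in> HS" and P0: "y \<notin> H"
    and P1: "\<And>H'. H' \<in> HS \<Longrightarrow> H \<subseteq> H' \<Longrightarrow> H' \<noteq> H \<Longrightarrow> y \<in> H'"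
    and P2: "\<And>H'. H' \<in> HS \<Longrightarrow> y \<in> H' \<Longrightarrow> H' \<inter> H \<noteq> {}"
  shows "\<exists>x\<in>F. fx x = insert (Id_on H) (fx y)"
proof -
  obtain a b where ab: "D a b" "a \<in> F" "b \<in> F" "H = W b a" using HS_D H by blast
  have eab: "Adj a b" using D_adj ab by blast
  have yV: "y \<in> V" using y F_iff by blast
  have bH: "b \<in> H" using Wself eab ab by blast
  define n0 where "n0 = (LEAST k. \<exists>z\<in>H. d y z = k)"
  have "\<exists>k. \<exists>z\<in>H. d y z = k" using bH by blast
  then have "\<exists>z\<in>H. d y z = n0" unfolding n0_def by (rule LeastI_ex)
  then obtain x where x: "x \<in> H" "d y x = n0" by blast
  have xmin: "n0 \<le> d y z" if "z \<in> H" for z using that unfolding n0_def by (intro Least_le) blast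
  have HV: "H \<subseteq> V" using HS_W H by blast
  have xV: "x \<in> V" using x HV by blast
  have xy: "x \<noteq> y" using x P0 by blast
  have d1: "d y x = 1"
  proof (rule ccontr)
    assume n1: "d y x \<noteq> 1"
    have "d y x \<noteq> 0" using d0 xy yV xV by metis
    then have n2: "d y x \<ge> 2" using n1 by arith
    obtain y1 where y1: "Adj y y1" "d y1 x + 1 = d y x" using first_step yV xV xy by blast
    have y1V: "y1 \<in> V" using adjV y1 by auto
    have y1H: "y1 \<notin> H"
    proof
      assume "y1 \<in> H" then have "n0 \<le> d y y1" using xmin by blast
      then show False using d_adj y1 x n2 by simp
    qed
    have HW: "H \<subseteq> W y1 y"
    proof
      fix z assume zH: "z \<in> H"
      show "z \<in> W y1 y"
      proof (rule ccontr)
        assume "z \<notin> W y1 y"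
        then have zW: "z \<in> W y y1" using Wdich[OF y1(1)] zH HV by blast
        have zV: "z \<in> V" using zH HV by blast
        obtain m where m: "m \<in> I y x" "m \<in> I x z" "m \<in> I z y" using median[OF yV xV zV] by blast
        have mV: "m \<in> V" using m I_iff by blast
        have "m \<in> H" using W_convex[OF adj_sym[OF eab]] x zH m ab by blast
        then have "n0 \<le> d y m" using xmin by blast
        moreover have "d y m + d m x = d y x" using m I_iff by blast
        ultimately have "d m x = 0" using x by simp
        then have "m = x" using d0 mV xV by blast
        then have "x \<in> I y z" using m(3) I_sym zV yV by blast
        moreover have "y \<in> W y y1" using Wself adj_sym[OF y1(1)] by blast
        ultimately have "x \<in> W y y1" using W_convex[OF y1(1)] zW by blast
        moreover have "d x y1 + 1 = d x y" using y1 d_sym xV yV y1V by simp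
        ultimately show False using W_iff by simp
      qed
    qed
    show False
    proof (cases "d v y < d v y1")
      case True
      have "cond b" using ab F_cond_iff by blast
      moreover have "d b y1 < d b y" using HW bH W_iff by blast
      ultimately have Dy: "D y y1" using True y1 unfolding cond_def by blast
      then have "y1 \<in> F" using F_closed y by blast
      then have "W y1 y \<in> HS" using HS_I Dy y by blast
      moreover have "W y1 y \<noteq> H" using Wself y1 y1H by blast
      ultimately have "y \<in> W y1 y" using P1 HW by blast
      then show False using W_iff by simp
    next
      case False
      then have dv: "d v y = d v y1 + 1" using dich[OF y1(1) vV] by auto
      then have "y1 \<in> I v y" using I_iff y1V d_adj adj_sym[OF y1(1)] by simp
      then have y1F: "y1 \<in> F" using F_down y by blast
      have "cond y" using y F_cond_iff by blast
      moreover have "d y y1 = 1" using d_adj y1 by blast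
      ultimately have Dy: "D y1 y" using dv adj_sym[OF y1(1)] unfolding cond_def by auto
      then have "W y y1 \<in> HS" using HS_I y1F y by blast
      moreover have "y \<in> W y y1" using Wself adj_sym[OF y1(1)] by blast
      ultimately have "W y y1 \<inter> H \<noteq> {}" using P2 by blast
      then show False using HW Wdisj by blast
    qed
  qed
  have "(Adj ^^ 1) y x" using dpath[OF yV xV] d1 by metis
  then have exy: "Adj y x" by (simp only: pow1)
  have yW: "y \<in> W a b" using Wdich[OF adj_sym[OF eab] yV] P0 ab by blast
  have "par (d a y) a b y x" using cross[OF eab exy yW] x ab by blast
  then have Dyx: "D y x" and WH: "W b a = W x y" using par_orient ab W_par by blast+
  have xF: "x \<in> F" using F_closed y Dyx by blast
  have key: "H' \<in> HS \<Longrightarrow> x \<in> H' \<longleftrightarrow> H' = H \<or> y \<in> H'" for H'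
  proof -
    assume H': "H' \<in> HS"
    then obtain a' b' where ab': "D a' b'" "a' \<in> F" "b' \<in> F" "H' = W b' a'" using HS_D by blast
    have eab': "Adj a' b'" using D_adj ab' by blast
    show ?thesis
    proof
      assume xH': "x \<in> H'"
      show "H' = H \<or> y \<in> H'"
      proof (cases "y \<in> H'")
        case False
        then have "y \<in> W a' b'" using Wdich[OF adj_sym[OF eab'] yV] ab' by blast
        then have "par (d a' y) a' b' y x" using cross[OF eab' exy] xH' ab' by blast
        then have "W b' a' = W x y" using W_par by blast
        then show ?thesis using WH ab ab' by simp
      qed simp
    next
      assume "H' = H \<or> y \<in> H'"
      then show "x \<in> H'"
      proof
        assume "H' = H" then show ?thesis using x by simp
      next
        assume yH': "y \<in> H'"
        show "x \<in> H'"
        proof (rule ccontr)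
          assume "x \<notin> H'"
          then have "x \<in> W a' b'" using Wdich[OF adj_sym[OF eab'] xV] ab' by blast
          then have "par (d a' x) a' b' x y" using cross[OF eab' adj_sym[OF exy]] yH' ab' by blast
          then have "D x y" using par_orient ab' by blast
          then show False using D_asym Dyx by blast
        qed
      qed
    qed
  qed
  have "fx x = insert (Id_on H) (fx y)"
  proof (rule set_eqI)
    fix e
    show "e \<in> fx x \<longleftrightarrow> e \<in> insert (Id_on H) (fx y)"
    proof
      assume "e \<in> fx x"
      then obtain H' where H': "H' \<in> HS" "e = Id_on H'" "x \<in> H'" unfolding fx_def EE_def by (auto simp: Id_on_mem)
      then show "e \<in> insert (Id_on H) (fx y)" using key[OF H'(1)] unfolding fx_def EE_def by (auto simp: Id_on_mem)
    next
      assume "e \<in> insert (Id_on H) (fx y)"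
      then obtain H' where H': "H' \<in> HS" "e = Id_on H'" "H' = H \<or> y \<in> H'"
        using H unfolding fx_def EE_def by (auto simp: Id_on_mem)
      then show "e \<in> fx x" using key[OF H'(1)] unfolding fx_def EE_def by (auto simp: Id_on_mem)
    qed
  qed
  then show ?thesis using xF by blast
qed

lemma surj_fx: "card C = n \<Longrightarrow> finite C \<Longrightarrow> C \<subseteq> EE \<Longrightarrow> (\<forall>e\<in>C. \<forall>e'\<in>EE. e \<subseteq> e' \<longrightarrow> e' \<in> C)
   \<Longrightarrow> (\<forall>e\<in>C. \<forall>e'\<in>C. e \<inter> e' \<noteq> {}) \<Longrightarrow> \<exists>x\<in>F. C = fx x"
proof (induction n arbitrary: C)
  case 0
  then have "C = {}" by simp
  then show ?case using fx_v vV F_iff by auto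
next
  case (Suc n)
  then have "C \<noteq> {}" by auto
  then obtain e where e: "e \<in> C" "\<And>b. b \<in> C \<Longrightarrow> b \<subseteq> e \<Longrightarrow> e = b"
    using finite_has_minimal[OF Suc.prems(2)] by blast
  define C' where "C' = C - {e}"
  have "card C' = n" using Suc.prems e unfolding C'_def by simp
  moreover have "finite C'" using Suc.prems unfolding C'_def by simp
  moreover have "C' \<subseteq> EE" using Suc.prems unfolding C'_def by blast
  moreover have "\<forall>e1\<in>C'. \<forall>e'\<in>EE. e1 \<subseteq> e' \<longrightarrow> e' \<in> C'"
  proof (intro ballI impI)
    fix e1 e' assume h: "e1 \<in> C'" "e' \<in> EE" "e1 \<subseteq> e'"
    then have "e' \<in> C" using Suc.prems unfolding C'_def by blast
    moreover have "e' \<noteq> e"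
    proof
      assume "e' = e"
      have "e1 \<in> C" "e1 \<noteq> e" using h(1) unfolding C'_def by simp_all
      moreover have "e1 \<subseteq> e" using h(3) \<open>e' = e\<close> by simp
      ultimately show False using e(2) by metis
    qed
    ultimately show "e' \<in> C'" unfolding C'_def by simp
  qed
  moreover have "\<forall>e\<in>C'. \<forall>e'\<in>C'. e \<inter> e' \<noteq> {}"
  proof (intro ballI)
    fix e1 e2 assume "e1 \<in> C'" "e2 \<in> C'"
    then have "e1 \<in> C" "e2 \<in> C" unfolding C'_def by simp_all
    then show "e1 \<inter> e2 \<noteq> {}" using Suc.prems(5) by simp
  qed
  ultimately obtain y where y: "y \<in> F" "C' = fx y" using Suc.IH by blast
  have "e \<in> EE" using e(1) Suc.prems(3) by (rule subsetD[rotated])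
  then obtain H where H: "H \<in> HS" "e = Id_on H" unfolding EE_def by (rule imageE)
  have P0: "y \<notin> H"
  proof
    assume "y \<in> H" then have "e \<in> fx y" using H \<open>e \<in> EE\<close> unfolding fx_def by (simp add: Id_on_mem)
    then have "e \<in> C - {e}" using y(2) unfolding C'_def by simp
    then show False by simp
  qed
  have P1: "y \<in> H'" if h: "H' \<in> HS" "H \<subseteq> H'" "H' \<noteq> H" for H'
  proof -
    have i: "Id_on H' \<in> EE" using h(1) unfolding EE_def by (rule imageI)
    moreover have "e \<subseteq> Id_on H'" unfolding H(2) Id_on_sub using h(2) .
    moreover have "\<forall>e'\<in>EE. e \<subseteq> e' \<longrightarrow> e' \<in> C" using Suc.prems(4) e(1) by (rule bspec)
    ultimately have "Id_on H' \<in> C" by blast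
    moreover have "Id_on H' \<noteq> e" unfolding H(2) Id_on_eq using h(3) .
    ultimately have "Id_on H' \<in> C'" unfolding C'_def by blast
    then have "Id_on H' \<in> fx y" using y(2) by simp
    then show ?thesis unfolding fx_def Id_on_mem by blast
  qed
  have P2: "H' \<inter> H \<noteq> {}" if h: "H' \<in> HS" "y \<in> H'" for H'
  proof -
    have "Id_on H' \<in> EE" using h(1) unfolding EE_def by (rule imageI)
    then have "Id_on H' \<in> fx y" using h(2) unfolding fx_def Id_on_mem by blast
    then have "Id_on H' \<in> C" using y(2) unfolding C'_def by blast
    moreover have "\<forall>e'\<in>C. Id_on H' \<inter> e' \<noteq> {}" using Suc.prems(5) calculation by (rule bspec)
    ultimately have "Id_on H' \<inter> e \<noteq> {}" using e(1) by blast
    then show ?thesis unfolding H(2) Id_on_int .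
  qed
  obtain x where "x \<in> F" "fx x = insert (Id_on H) (fx y)" using surj_step[OF y(1) H(1) P0 P1 P2] by blast
  moreover have "C = insert e C'" using e(1) unfolding C'_def by (simp add: insert_absorb)
  ultimately show ?case using y H by metis
qed

lemma part3: "\<exists>(E :: ('a \<times> 'a) set set) le cf f. event_structure E le cf
          \<and> bij_betw f F (configurations E le cf)
          \<and> (\<forall>x\<in>F. \<forall>y\<in>F. dir_le D x y \<longleftrightarrow> f x \<subseteq> f y)"
proof (intro exI conjI)
  let ?le = "\<lambda>e e'. e' \<subseteq> (e :: ('a \<times> 'a) set)"
  let ?cf = "\<lambda>e e'. e \<inter> e' = ({} :: ('a \<times> 'a) set)"
  show "event_structure EE ?le ?cf"
    unfolding event_structure_def
  proof (intro conjI ballI impI)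
    fix e assume "e \<in> EE"
    then obtain H where H: "H \<in> HS" "e = Id_on H" unfolding EE_def by blast
    then obtain b where b: "b \<in> H" "b \<in> F" using HS_ne by blast
    have "{e' \<in> EE. ?le e' e} \<subseteq> Id_on ` {H' \<in> HS. b \<in> H'}"
    proof
      fix e' assume "e' \<in> {e' \<in> EE. ?le e' e}"
      then have e': "e' \<in> EE" "Id_on H \<subseteq> e'" using H by simp_all
      from e'(1) obtain H' where H': "H' \<in> HS" "e' = Id_on H'" unfolding EE_def by (rule imageE)
      then have "H \<subseteq> H'" using e' Id_on_sub by metis
      then have "b \<in> H'" using b by blast
      then show "e' \<in> Id_on ` {H' \<in> HS. b \<in> H'}" using H' by blast
    qed
    moreover have "finite (Id_on ` {H' \<in> HS. b \<in> H'})" using fin_HS b F_iff by blast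
    ultimately show "finite {e' \<in> EE. ?le e' e}" by (rule finite_subset)
    have "(b,b) \<in> e" unfolding H(2) Id_on_mem using b(1) .
    then show "\<not> ?cf e e" by blast
  qed blast+
  show "bij_betw fx F (configurations EE ?le ?cf)"
    unfolding bij_betw_def
  proof
    show "inj_on fx F"
    proof (rule inj_onI)
      fix x y assume a: "x \<in> F" "y \<in> F" "fx x = fx y"
      have "dir_le D x y" "dir_le D y x" using fx_sub[OF a(1,2)] fx_sub[OF a(2,1)] a(3) by auto
      then have "x \<in> I v y" "y \<in> I v x" using dir_I a unfolding dir_le_def by auto
      then have "d v x + d x y = d v y" "d v y + d y x = d v x" using I_iff by simp_all
      moreover have "d x y = d y x" using d_sym F_iff a by blast
      ultimately have "d x y = 0" by linarith
      then show "x = y" using d0 F_iff a by blast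
    qed
    show "fx ` F = configurations EE ?le ?cf"
    proof
      show "fx ` F \<subseteq> configurations EE ?le ?cf"
      proof
        fix C assume "C \<in> fx ` F"
        then obtain x where x: "x \<in> F" "C = fx x" by blast
        have "C \<subseteq> Id_on ` {H \<in> HS. x \<in> H}"
        proof
          fix e assume "e \<in> C"
          then have e: "e \<in> EE" "(x,x) \<in> e" using x unfolding fx_def by simp_all
          from e(1) obtain H where H: "H \<in> HS" "e = Id_on H" unfolding EE_def by (rule imageE)
          then have "x \<in> H" using e Id_on_mem by metis
          then show "e \<in> Id_on ` {H \<in> HS. x \<in> H}" using H by blast
        qed
        moreover have "finite (Id_on ` {H \<in> HS. x \<in> H})" using fin_HS x F_iff by blast
        ultimately have fin: "finite C" by (rule finite_subset)
        have c1: "C \<subseteq> EE" using x unfolding fx_def by blast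
        have c2: "\<forall>e\<in>C. \<forall>e'\<in>EE. ?le e' e \<longrightarrow> e' \<in> C" using x unfolding fx_def by blast
        have c3: "\<forall>e\<in>C. \<forall>e'\<in>C. \<not> ?cf e e'" using x unfolding fx_def by blast
        show "C \<in> configurations EE ?le ?cf" unfolding configurations_def using fin c1 c2 c3 by blast
      qed
      show "configurations EE ?le ?cf \<subseteq> fx ` F"
      proof
        fix C assume "C \<in> configurations EE ?le ?cf"
        then have c: "finite C" "C \<subseteq> EE" "\<forall>e\<in>C. \<forall>e'\<in>EE. e \<subseteq> e' \<longrightarrow> e' \<in> C" "\<forall>e\<in>C. \<forall>e'\<in>C. e \<inter> e' \<noteq> {}"
          unfolding configurations_def by simp_all
        obtain x where "x \<in> F" "C = fx x" using surj_fx[OF refl c] by (elim bexE)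
        then show "C \<in> fx ` F" by blast
      qed
    qed
  qed
  show "\<forall>x\<in>F. \<forall>y\<in>F. dir_le D x y \<longleftrightarrow> fx x \<subseteq> fx y" using fx_sub by blast
qed

lemma part4: "u \<in> F \<Longrightarrow> principal_filter V D u \<subseteq> F \<and> principal_filter V D u = {x \<in> F. basepoint_le V Adj v u x}"
proof -
  assume u: "u \<in> F"
  have sub: "principal_filter V D u \<subseteq> F"
    using u unfolding principal_filter_def dir_le_def by auto
  moreover have "principal_filter V D u = {x \<in> F. basepoint_le V Adj v u x}"
  proof
    show "principal_filter V D u \<subseteq> {x \<in> F. basepoint_le V Adj v u x}"
      using sub part2 u unfolding principal_filter_def by blast
    show "{x \<in> F. basepoint_le V Adj v u x} \<subseteq> principal_filter V D u"
      using part2 u F_iff unfolding principal_filter_def by blast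
  qed
  ultimately show ?thesis by blast
qed

end

theorem lemma4p1:
  fixes V :: "'a set" and Adj D :: "'a \<Rightarrow> 'a \<Rightarrow> bool" and v :: 'a
  assumes "directed_median_graph V Adj D" and "v \<in> V"
  shows "convex_set V Adj (principal_filter V D v)
    \<and> (\<forall>x\<in>principal_filter V D v. \<forall>y\<in>principal_filter V D v.
          dir_le D x y \<longleftrightarrow> basepoint_le V Adj v x y)
    \<and> (\<exists>(E :: ('a \<times> 'a) set set) le cf f. event_structure E le cf
          \<and> bij_betw f (principal_filter V D v) (configurations E le cf)
          \<and> (\<forall>x\<in>principal_filter V D v. \<forall>y\<in>principal_filter V D v.
               dir_le D x y \<longleftrightarrow> f x \<subseteq> f y))
    \<and> (\<forall>u\<in>principal_filter V D v.
          principal_filter V D u \<subseteq> principal_filter V D v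
          \<and> principal_filter V D u = {x \<in> principal_filter V D v. basepoint_le V Adj v u x})"
proof -
  interpret dmgv V Adj D v using assms by unfold_locales
  show ?thesis using part1 part2 part3 part4 by blast
qed

end
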